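(* Let $X$ be a Grothendieck Banach space and let $M$ be a closed subspace of $X$ such that the quotient $X/M$ is separable. Then $M$ is a Grothendieck space.
   Context: A Banach space $Z$ is called a Grothendieck space if every $\sigma(Z^*,Z)$-convergent (i.e. weak$^*$-convergent) sequence in the dual $Z^*$ is $\sigma(Z^*,Z^{**})$-convergent (i.e. weakly convergent). *)

theory Defs
  imports "HOL-Analysis.Analysis"
begin

text \<open>Continuous dual of a linear subspace S (with the induced norm) of a real normed space.
  Functionals are represented extensionally: they vanish outside S.\<close>
definition sdual :: "'a::real_normed_vector set \<Rightarrow> ('a \<Rightarrow> real) set" where
  "sdual S = {f. (\<forall>x\<in>S. \<forall>y\<in>S. f (x + y) = f x + f y)
               \<and> (\<forall>c. \<forall>x\<in>S. f (c *\<^sub>R x) = c * f x)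
               \<and> (\<exists>K. \<forall>x\<in>S. \<bar>f x\<bar> \<le> K * norm x)
               \<and> (\<forall>x. x \<notin> S \<longrightarrow> f x = 0)}"

definition sdual_norm :: "'a::real_normed_vector set \<Rightarrow> ('a \<Rightarrow> real) \<Rightarrow> real" where
  "sdual_norm S f = (SUP x\<in>{x\<in>S. norm x \<le> 1}. \<bar>f x\<bar>)"

definition sbidual :: "'a::real_normed_vector set \<Rightarrow> (('a \<Rightarrow> real) \<Rightarrow> real) set" where
  "sbidual S = {\<Phi>. (\<forall>f\<in>sdual S. \<forall>g\<in>sdual S. \<Phi> (\<lambda>x. f x + g x) = \<Phi> f + \<Phi> g)
               \<and> (\<forall>c. \<forall>f\<in>sdual S. \<Phi> (\<lambda>x. c * f x) = c * \<Phi> f)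
               \<and> (\<exists>K. \<forall>f\<in>sdual S. \<bar>\<Phi> f\<bar> \<le> K * sdual_norm S f)}"

definition grothendieck_space :: "'a::real_normed_vector set \<Rightarrow> bool" where
  "grothendieck_space S \<longleftrightarrow>
     (\<forall>g. (\<forall>n. g n \<in> sdual S) \<longrightarrow>
        (\<exists>g0\<in>sdual S. \<forall>x\<in>S. (\<lambda>n. g n x) \<longlonglongrightarrow> g0 x) \<longrightarrow>
        (\<exists>h\<in>sdual S. \<forall>\<Phi>\<in>sbidual S. (\<lambda>n. \<Phi> (g n)) \<longlonglongrightarrow> \<Phi> h))"

text \<open>The quotient X/M (quotient norm of x + M is infdist x M) is separable:
  some countable set of cosets d + M (d \<in> D) is dense in X/M.\<close>
definition quotient_separable :: "'a::real_normed_vector set \<Rightarrow> bool" where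
  "quotient_separable M \<longleftrightarrow>
     (\<exists>D. countable D \<and> (\<forall>x. \<forall>e>0. \<exists>d\<in>D. infdist (x - d) M < e))"

end

theory Submission
  imports Defs "HOL-Library.Diagonal_Subsequence"
begin

lemma hahn_banach_norm:
  fixes f :: "'a::real_normed_vector \<Rightarrow> real"
  assumes M: "subspace M" and K: "K \<ge> 0"
    and add: "\<forall>x\<in>M. \<forall>y\<in>M. f (x + y) = f x + f y"
    and hom: "\<forall>c. \<forall>x\<in>M. f (c *\<^sub>R x) = c * f x"
    and bd: "\<forall>x\<in>M. \<bar>f x\<bar> \<le> K * norm x"
  shows "\<exists>F. (\<forall>x y. F (x + y) = F x + F y) \<and> (\<forall>c x. F (c *\<^sub>R x) = c * F x)
           \<and> (\<forall>x. \<bar>F x\<bar> \<le> K * norm x) \<and> (\<forall>x\<in>M. F x = f x)"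
proof -
  define A where "A = {G :: ('a \<times> real) set. (\<forall>x a b. (x,a)\<in>G \<longrightarrow> (x,b)\<in>G \<longrightarrow> a = b)
     \<and> (\<forall>x\<in>M. (x, f x) \<in> G)
     \<and> (\<forall>x a y b. (x,a)\<in>G \<longrightarrow> (y,b)\<in>G \<longrightarrow> (x+y, a+b)\<in>G)
     \<and> (\<forall>c x a. (x,a)\<in>G \<longrightarrow> (c *\<^sub>R x, c*a)\<in>G)
     \<and> (\<forall>x a. (x,a)\<in>G \<longrightarrow> a \<le> K * norm x)}"
  define G0 where "G0 = (\<lambda>x. (x, f x)) ` M"
  have "G0 \<in> A"
    unfolding A_def G0_def using add hom bd M
    by (auto simp: subspace_def abs_le_iff)
  have "\<forall>C\<in>chains A. \<exists>U\<in>A. \<forall>X\<in>C. X \<subseteq> U"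
  proof
    fix C assume C: "C \<in> chains A"
    show "\<exists>U\<in>A. \<forall>X\<in>C. X \<subseteq> U"
    proof (cases "C = {}")
      case True then show ?thesis using \<open>G0 \<in> A\<close> by blast
    next
      case False
      have CA: "C \<subseteq> A" and ch: "\<forall>X\<in>C. \<forall>Y\<in>C. X \<subseteq> Y \<or> Y \<subseteq> X"
        using C by (auto simp: chains_def chain_subset_def)
      have two: "\<exists>Z\<in>C. p \<in> Z \<and> q \<in> Z" if "p \<in> \<Union>C" "q \<in> \<Union>C" for p q
        using that ch by blast
      have "\<Union>C \<in> A"
        unfolding A_def
      proof (intro CollectI conjI allI impI ballI)
        fix x a b assume "(x,a) \<in> \<Union>C" "(x,b) \<in> \<Union>C"
        then obtain Z where "Z \<in> C" "(x,a)\<in>Z" "(x,b)\<in>Z" using two by blast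
        then show "a = b" using CA unfolding A_def by blast
      next
        fix x assume "x \<in> M"
        obtain Z where "Z \<in> C" using False by blast
        then show "(x, f x) \<in> \<Union>C" using CA \<open>x\<in>M\<close> unfolding A_def by blast
      next
        fix x a y b assume "(x,a) \<in> \<Union>C" "(y,b) \<in> \<Union>C"
        then obtain Z where "Z \<in> C" "(x,a)\<in>Z" "(y,b)\<in>Z" using two by blast
        then show "(x+y, a+b) \<in> \<Union>C" using CA unfolding A_def by blast
      next
        fix c x a assume "(x,a) \<in> \<Union>C"
        then obtain Z where "Z \<in> C" "(x,a)\<in>Z" by blast
        then show "(c *\<^sub>R x, c*a) \<in> \<Union>C" using CA unfolding A_def by blast
      next
        fix x a assume "(x,a) \<in> \<Union>C"
        then obtain Z where "Z \<in> C" "(x,a)\<in>Z" by blast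
        then show "a \<le> K * norm x" using CA unfolding A_def by blast
      qed
      then show ?thesis by blast
    qed
  qed
  from Zorn_Lemma2[OF this] obtain Gm where Gm: "Gm \<in> A" and max0: "\<forall>X\<in>A. Gm \<subseteq> X \<longrightarrow> X = Gm"
    by blast
  have max: "\<And>X. X \<in> A \<Longrightarrow> Gm \<subseteq> X \<Longrightarrow> X = Gm" using max0 by blast
  have gfun: "\<And>x a b. (x,a)\<in>Gm \<Longrightarrow> (x,b)\<in>Gm \<Longrightarrow> a = b"
    and inM: "\<And>x. x\<in>M \<Longrightarrow> (x, f x) \<in> Gm"
    and gadd: "\<And>x a y b. (x,a)\<in>Gm \<Longrightarrow> (y,b)\<in>Gm \<Longrightarrow> (x+y, a+b)\<in>Gm"
    and gsc: "\<And>c x a. (x,a)\<in>Gm \<Longrightarrow> (c *\<^sub>R x, c*a)\<in>Gm"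
    and gbd: "\<And>x a. (x,a)\<in>Gm \<Longrightarrow> a \<le> K * norm x"
    using Gm unfolding A_def by blast+
  have zero: "(0, 0) \<in> Gm"
    using gsc[OF inM[OF subspace_0[OF M]], of 0] by simp
  have total: "\<exists>a. (x0, a) \<in> Gm" for x0
  proof (rule ccontr)
    assume nx: "\<nexists>a. (x0, a) \<in> Gm"
    define S where "S = {a - K * norm (y - x0) | y a. (y,a)\<in>Gm}"
    have ub: "s \<le> K * norm (z + x0) - b" if "s \<in> S" "(z,b) \<in> Gm" for s z b
    proof -
      obtain y a where ya: "s = a - K * norm (y - x0)" "(y,a)\<in>Gm" using \<open>s\<in>S\<close> S_def by blast
      have "a + b \<le> K * norm (y + z)" using gbd[OF gadd[OF ya(2) that(2)]] .
      also have "y + z = (y - x0) + (z + x0)" by simp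
      also have "K * norm \<dots> \<le> K * norm (y - x0) + K * norm (z + x0)"
        using K norm_triangle_ineq[of "y - x0" "z + x0"] by (simp add: mult_left_mono distrib_left[symmetric])
      finally show ?thesis using ya by simp
    qed
    have Sne: "S \<noteq> {}" using zero S_def by blast
    have Sbdd: "bdd_above S" using ub[OF _ zero] unfolding bdd_above_def by blast
    define c where "c = Sup S"
    have c1: "a - K * norm (y - x0) \<le> c" if "(y,a)\<in>Gm" for y a
      unfolding c_def using that Sbdd by (intro cSup_upper) (auto simp: S_def)
    have c2: "c \<le> K * norm (z + x0) - b" if "(z,b)\<in>Gm" for z b
      unfolding c_def using that Sne by (intro cSup_least) (auto intro: ub)
    define G' where "G' = {(y + t *\<^sub>R x0, a + t * c) | y a t. (y,a)\<in>Gm}"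
    have "G' \<in> A"
      unfolding A_def
    proof (intro CollectI conjI allI impI ballI)
      fix x a b assume "(x,a) \<in> G'" "(x,b) \<in> G'"
      then obtain y1 a1 t1 y2 a2 t2 where e: "x = y1 + t1 *\<^sub>R x0" "a = a1 + t1 * c" "(y1,a1)\<in>Gm"
        "x = y2 + t2 *\<^sub>R x0" "b = a2 + t2 * c" "(y2,a2)\<in>Gm"
        unfolding G'_def by blast
      have "t1 = t2"
      proof (rule ccontr)
        assume "t1 \<noteq> t2"
        have "(y2 + (-1) *\<^sub>R y1, a2 + (-1) * a1) \<in> Gm" using gadd[OF e(6) gsc[OF e(3)]] .
        from gsc[OF this, of "1/(t1 - t2)"]
        have "((1/(t1-t2)) *\<^sub>R (y2 - y1), (1/(t1-t2)) * (a2 - a1)) \<in> Gm" by simp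
        moreover have "(1/(t1-t2)) *\<^sub>R (y2 - y1) = x0"
        proof -
          have "y2 - y1 = (t1 - t2) *\<^sub>R x0" using e(1,4) by (simp add: algebra_simps)
          then show ?thesis using \<open>t1 \<noteq> t2\<close> by simp
        qed
        ultimately show False using nx by auto
      qed
      then have "y1 = y2" using e(1,4) by simp
      then have "a1 = a2" using gfun e(3,6) by blast
      then show "a = b" using e \<open>t1 = t2\<close> by simp
    next
      fix x assume "x \<in> M"
      then have "(x + 0 *\<^sub>R x0, f x + 0 * c) \<in> G'" unfolding G'_def using inM by blast
      then show "(x, f x) \<in> G'" by simp
    next
      fix x a y b assume "(x,a) \<in> G'" "(y,b) \<in> G'"
      then obtain y1 a1 t1 y2 a2 t2 where e: "x = y1 + t1 *\<^sub>R x0" "a = a1 + t1 * c" "(y1,a1)\<in>Gm"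
        "y = y2 + t2 *\<^sub>R x0" "b = a2 + t2 * c" "(y2,a2)\<in>Gm"
        unfolding G'_def by blast
      have "x + y = (y1 + y2) + (t1 + t2) *\<^sub>R x0" "a + b = (a1 + a2) + (t1 + t2) * c"
        using e by (auto simp: algebra_simps)
      then show "(x+y, a+b) \<in> G'" unfolding G'_def using gadd[OF e(3) e(6)] by blast
    next
      fix r x a assume "(x,a) \<in> G'"
      then obtain y1 a1 t1 where e: "x = y1 + t1 *\<^sub>R x0" "a = a1 + t1 * c" "(y1,a1)\<in>Gm"
        unfolding G'_def by blast
      have "r *\<^sub>R x = r *\<^sub>R y1 + (r * t1) *\<^sub>R x0" "r * a = r * a1 + (r * t1) * c"
        using e by (auto simp: algebra_simps)
      then show "(r *\<^sub>R x, r*a) \<in> G'" unfolding G'_def using gsc[OF e(3)] by blast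
    next
      fix x a assume "(x,a) \<in> G'"
      then obtain y a1 t where e: "x = y + t *\<^sub>R x0" "a = a1 + t * c" "(y,a1)\<in>Gm"
        unfolding G'_def by blast
      show "a \<le> K * norm x"
      proof (cases "t = 0")
        case True then show ?thesis using e gbd by simp
      next
        case False
        show ?thesis
        proof (cases "t > 0")
          case True
          have "c \<le> K * norm ((1/t) *\<^sub>R y + x0) - (1/t) * a1" using c2[OF gsc[OF e(3)]] .
          also have "(1/t) *\<^sub>R y + x0 = (1/t) *\<^sub>R x" using e True by (simp add: algebra_simps)
          finally have "t * c \<le> t * (K * ((1/t) * norm x) - (1/t) * a1)"
            using True by (simp add: mult_left_mono)
          also have "\<dots> = K * norm x - a1" using True by (simp add: field_simps)
          finally show ?thesis using e by simp
        next
          case False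
          then have tn: "t < 0" using \<open>t \<noteq> 0\<close> by simp
          have "(1/(-t)) * a1 - K * norm ((1/(-t)) *\<^sub>R y - x0) \<le> c" using c1[OF gsc[OF e(3)]] .
          also have "(1/(-t)) *\<^sub>R y - x0 = (1/(-t)) *\<^sub>R x" using e tn by (simp add: algebra_simps)
          finally have "(-t) * ((1/(-t)) * a1 - K * ((1/(-t)) * norm x)) \<le> (-t) * c"
            using tn by (simp add: mult_left_mono)
          moreover have "(-t) * ((1/(-t)) * a1 - K * ((1/(-t)) * norm x)) = a1 - K * norm x"
            using tn by (simp add: field_simps)
          ultimately show ?thesis using e by simp
        qed
      qed
    qed
    moreover have "Gm \<subseteq> G'"
    proof
      fix p assume "p \<in> Gm"
      then obtain y a where "p = (y,a)" "(y,a)\<in>Gm" by (cases p) auto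
      then have "(y + 0 *\<^sub>R x0, a + 0 * c) \<in> G'" unfolding G'_def by blast
      then show "p \<in> G'" using \<open>p = (y,a)\<close> by simp
    qed
    ultimately have "G' = Gm" using max by blast
    moreover have "(0 + 1 *\<^sub>R x0, 0 + 1 * c) \<in> G'" unfolding G'_def using zero by blast
    then have "(x0, c) \<in> G'" by simp
    ultimately show False using nx by blast
  qed
  define F where "F x = (SOME a. (x,a)\<in>Gm)" for x
  have FG: "(x, F x) \<in> Gm" for x unfolding F_def using total by (rule someI_ex)
  have Feq: "(x,a)\<in>Gm \<Longrightarrow> F x = a" for x a using gfun FG by blast
  have Fadd: "F (x + y) = F x + F y" for x y using Feq[OF gadd[OF FG FG]] .
  have Fsc: "F (c *\<^sub>R x) = c * F x" for c x using Feq[OF gsc[OF FG]] .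
  have Fbd: "\<bar>F x\<bar> \<le> K * norm x" for x
  proof -
    have "F x \<le> K * norm x" using gbd[OF FG] .
    moreover have "- F x \<le> K * norm x" using gbd[OF FG, of "(-1) *\<^sub>R x"] Fsc[of "-1" x] by simp
    ultimately show ?thesis by linarith
  qed
  show ?thesis using Fadd Fsc Fbd Feq[OF inM] by blast
qed

lemma sdualD:
  assumes "f \<in> sdual S"
  shows "\<And>x y. x\<in>S \<Longrightarrow> y\<in>S \<Longrightarrow> f (x + y) = f x + f y"
    and "\<And>c x. x\<in>S \<Longrightarrow> f (c *\<^sub>R x) = c * f x"
    and "\<exists>K\<ge>0. \<forall>x\<in>S. \<bar>f x\<bar> \<le> K * norm x"
    and "\<And>x. x \<notin> S \<Longrightarrow> f x = 0"
proof -
  show "\<And>x y. x\<in>S \<Longrightarrow> y\<in>S \<Longrightarrow> f (x + y) = f x + f y"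
    "\<And>c x. x\<in>S \<Longrightarrow> f (c *\<^sub>R x) = c * f x" "\<And>x. x \<notin> S \<Longrightarrow> f x = 0"
    using assms by (auto simp: sdual_def)
  obtain K where K: "\<forall>x\<in>S. \<bar>f x\<bar> \<le> K * norm x" using assms by (auto simp: sdual_def)
  have "\<forall>x\<in>S. \<bar>f x\<bar> \<le> max K 0 * norm x"
  proof
    fix x assume "x \<in> S"
    have "K * norm x \<le> max K 0 * norm x" by (simp add: mult_right_mono)
    then show "\<bar>f x\<bar> \<le> max K 0 * norm x" using K \<open>x\<in>S\<close> by force
  qed
  then show "\<exists>K\<ge>0. \<forall>x\<in>S. \<bar>f x\<bar> \<le> K * norm x" by (intro exI[of _ "max K 0"]) auto
qed

lemma sdual_0: "f \<in> sdual S \<Longrightarrow> f 0 = 0"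
  using sdualD(2)[of f S 0 0] sdualD(4)[of f S 0] by (cases "0 \<in> S") auto

lemma sdual_diff:
  assumes "f \<in> sdual S" "subspace S" "x \<in> S" "y \<in> S"
  shows "f (x - y) = f x - f y"
proof -
  have "(-1) *\<^sub>R y \<in> S" using assms by (simp add: subspace_neg)
  then have "f (x + (-1) *\<^sub>R y) = f x + f ((-1) *\<^sub>R y)" using sdualD(1)[OF assms(1)] assms by blast
  also have "f ((-1) *\<^sub>R y) = - f y" using sdualD(2)[OF assms(1) assms(4), of "-1"] by simp
  finally show ?thesis by simp
qed

lemma sdual_continuous:
  assumes "f \<in> sdual S" "subspace S"
  shows "continuous_on S f"
proof -
  obtain K where K: "K \<ge> 0" "\<forall>x\<in>S. \<bar>f x\<bar> \<le> K * norm x" using sdualD(3)[OF assms(1)] by blast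
  show ?thesis unfolding continuous_on_iff
  proof (intro ballI allI impI)
    fix x e assume x: "x \<in> S" and e: "(0::real) < e"
    show "\<exists>d>0. \<forall>x'\<in>S. dist x' x < d \<longrightarrow> dist (f x') (f x) < e"
    proof (intro exI[of _ "e / (K + 1)"] conjI ballI impI)
      show "0 < e / (K + 1)" using e K by simp
      fix x' assume x': "x' \<in> S" and d: "dist x' x < e / (K + 1)"
      have "dist (f x') (f x) = \<bar>f (x' - x)\<bar>" using sdual_diff[OF assms x' x] by (simp add: dist_real_def)
      also have "\<dots> \<le> K * norm (x' - x)" using K x x' assms(2) by (simp add: subspace_diff)
      also have "\<dots> \<le> (K + 1) * norm (x' - x)" by (simp add: mult_right_mono)
      also have "\<dots> < (K + 1) * (e / (K + 1))" using d K by (intro mult_strict_left_mono) (auto simp: dist_norm)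
      also have "\<dots> = e" using K by simp
      finally show "dist (f x') (f x) < e" .
    qed
  qed
qed

lemma uniform_bound:
  fixes u :: "nat \<Rightarrow> 'a::banach \<Rightarrow> real"
  assumes M: "subspace M" "closed M" and u: "\<And>n. u n \<in> sdual M"
    and conv: "\<And>x. x \<in> M \<Longrightarrow> convergent (\<lambda>n. u n x)"
  shows "\<exists>B\<ge>0. \<forall>n. \<forall>x\<in>M. \<bar>u n x\<bar> \<le> B * norm x"
proof -
  define F where "F k = (\<Inter>n. M \<inter> (\<lambda>x. \<bar>u n x\<bar>) -` {..real k})" for k :: nat
  have clF: "closedin (top_of_set M) (F k)" for k
    unfolding F_def
  proof (intro closedin_INT)
    fix n
    have "continuous_on M (\<lambda>x. \<bar>u n x\<bar>)" using sdual_continuous[OF u M(1)] by (intro continuous_intros)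
    then show "closedin (top_of_set M) (M \<inter> (\<lambda>x. \<bar>u n x\<bar>) -` {..real k})"
      by (rule continuous_closedin_preimage) simp
  qed simp
  have UF: "\<Union>(range F) = M"
  proof
    show "\<Union>(range F) \<subseteq> M" unfolding F_def by blast
    show "M \<subseteq> \<Union>(range F)"
    proof
      fix x assume "x \<in> M"
      then have "Bseq (\<lambda>n. u n x)" using conv convergent_imp_Bseq by blast
      then obtain C where C: "\<And>n. norm (u n x) \<le> C" by (auto simp: Bseq_def)
      obtain k :: nat where "C \<le> real k" using real_arch_simple by blast
      then have "x \<in> F k" unfolding F_def using C \<open>x\<in>M\<close> by (auto intro: order_trans)
      then show "x \<in> \<Union>(range F)" by blast
    qed
  qed
  have cms: "completely_metrizable_space (top_of_set M)"
    by (rule completely_metrizable_space_closedin[OF completely_metrizable_space_euclidean])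
       (simp add: M(2))
  have "\<exists>k. (top_of_set M) interior_of (F k) \<noteq> {}"
  proof (rule ccontr)
    assume "\<not> ?thesis"
    then have "(top_of_set M) interior_of \<Union>(range F) = {}"
      using Baire_category_alt[OF disjI1[OF cms], of "range F"] clF by auto
    moreover have "(top_of_set M) interior_of \<Union>(range F) = M" using UF interior_of_topspace[of "top_of_set M"] by simp
    ultimately show False using subspace_0[OF M(1)] by simp
  qed
  then obtain k x0 where x0: "x0 \<in> (top_of_set M) interior_of (F k)" by blast
  have "openin (top_of_set M) ((top_of_set M) interior_of (F k))" by simp
  then obtain r where r: "r > 0" "ball x0 r \<inter> M \<subseteq> (top_of_set M) interior_of (F k)"
    using x0 unfolding openin_contains_ball by blast
  have sub: "(top_of_set M) interior_of (F k) \<subseteq> F k" by (rule interior_of_subset)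
  have x0M: "x0 \<in> M" and x0F: "x0 \<in> F k" using x0 sub unfolding F_def by auto
  define B where "B = 4 * real k / r"
  have "\<forall>n. \<forall>x\<in>M. \<bar>u n x\<bar> \<le> B * norm x"
  proof (intro allI ballI)
    fix n x assume xM: "x \<in> M"
    show "\<bar>u n x\<bar> \<le> B * norm x"
    proof (cases "x = 0")
      case True then show ?thesis using sdual_0[OF u] by simp
    next
      case False
      define t where "t = r / (2 * norm x)"
      have t: "t > 0" using r False by (simp add: t_def)
      have ytM: "t *\<^sub>R x \<in> M" using xM M(1) by (simp add: subspace_scale)
      have yM: "x0 + t *\<^sub>R x \<in> M" using x0M ytM M(1) by (simp add: subspace_add)
      have "dist x0 (x0 + t *\<^sub>R x) = t * norm x" using t by (simp add: dist_norm)
      also have "\<dots> = r / 2" using False by (simp add: t_def)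
      finally have "x0 + t *\<^sub>R x \<in> ball x0 r" using r by simp
      then have "x0 + t *\<^sub>R x \<in> F k" using r(2) sub yM by blast
      then have h1: "\<bar>u n (x0 + t *\<^sub>R x)\<bar> \<le> real k" unfolding F_def by auto
      have h2: "\<bar>u n x0\<bar> \<le> real k" using x0F unfolding F_def by auto
      have "u n (x0 + t *\<^sub>R x) = u n x0 + t * u n x"
        using sdualD(1)[OF u x0M ytM] sdualD(2)[OF u xM] by simp
      then have "\<bar>t * u n x\<bar> \<le> 2 * real k" using h1 h2 by linarith
      then have "t * \<bar>u n x\<bar> \<le> 2 * real k" using t by (simp add: abs_mult)
      then have "\<bar>u n x\<bar> \<le> 2 * real k / t" using t by (simp add: field_simps)
      also have "2 * real k / t = B * norm x" using False r by (simp add: t_def B_def field_simps)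
      finally show ?thesis .
    qed
  qed
  moreover have "B \<ge> 0" using r by (simp add: B_def)
  ultimately show ?thesis by blast
qed

lemma sdual_add: "f \<in> sdual S \<Longrightarrow> g \<in> sdual S \<Longrightarrow> (\<lambda>x. f x + g x) \<in> sdual S"
proof -
  assume f: "f \<in> sdual S" and g: "g \<in> sdual S"
  obtain K1 where K1: "K1 \<ge> 0" "\<forall>x\<in>S. \<bar>f x\<bar> \<le> K1 * norm x" using sdualD(3)[OF f] by blast
  obtain K2 where K2: "K2 \<ge> 0" "\<forall>x\<in>S. \<bar>g x\<bar> \<le> K2 * norm x" using sdualD(3)[OF g] by blast
  have "\<forall>x\<in>S. \<bar>f x + g x\<bar> \<le> (K1 + K2) * norm x"
  proof
    fix x assume "x \<in> S"
    then have "\<bar>f x\<bar> \<le> K1 * norm x" "\<bar>g x\<bar> \<le> K2 * norm x" using K1 K2 by auto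
    then show "\<bar>f x + g x\<bar> \<le> (K1 + K2) * norm x" by (simp add: distrib_right abs_triangle_ineq order_trans[OF abs_triangle_ineq])
  qed
  then have bd: "\<exists>K. \<forall>x\<in>S. \<bar>f x + g x\<bar> \<le> K * norm x" by blast
  show ?thesis unfolding sdual_def
  proof (intro CollectI conjI)
    show "\<exists>K. \<forall>x\<in>S. \<bar>f x + g x\<bar> \<le> K * norm x" by (rule bd)
  qed (use sdualD(1,2,4)[OF f] sdualD(1,2,4)[OF g] in \<open>auto simp: algebra_simps\<close>)
qed

lemma sdual_scale: "f \<in> sdual S \<Longrightarrow> (\<lambda>x. c * f x) \<in> sdual S"
proof -
  assume f: "f \<in> sdual S"
  obtain K1 where K1: "K1 \<ge> 0" "\<forall>x\<in>S. \<bar>f x\<bar> \<le> K1 * norm x" using sdualD(3)[OF f] by blast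
  have "\<forall>x\<in>S. \<bar>c * f x\<bar> \<le> (\<bar>c\<bar> * K1) * norm x"
    using K1 by (auto simp: abs_mult mult.assoc intro: mult_left_mono)
  then have bd: "\<exists>K. \<forall>x\<in>S. \<bar>c * f x\<bar> \<le> K * norm x" by blast
  show ?thesis unfolding sdual_def
  proof (intro CollectI conjI)
    show "\<exists>K. \<forall>x\<in>S. \<bar>c * f x\<bar> \<le> K * norm x" by (rule bd)
  qed (use sdualD(1,2,4)[OF f] in \<open>auto simp: algebra_simps\<close>)
qed

lemma sdual_zero_fun: "(\<lambda>x. 0) \<in> sdual S"
  unfolding sdual_def by (auto intro: exI[of _ 0])

lemma sdual_norm_bdd:
  assumes "f \<in> sdual S"
  shows "bdd_above ((\<lambda>x. \<bar>f x\<bar>) ` {x\<in>S. norm x \<le> 1})"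
proof -
  obtain K where K: "K \<ge> 0" "\<forall>x\<in>S. \<bar>f x\<bar> \<le> K * norm x" using sdualD(3)[OF assms] by blast
  have "\<bar>f x\<bar> \<le> K" if "x \<in> S" "norm x \<le> 1" for x
    using K that order_trans[of _ "K * norm x" K] by (simp add: mult_left_le)
  then show ?thesis unfolding bdd_above_def by blast
qed

lemma sdual_norm_bound:
  assumes f: "f \<in> sdual S" and S: "subspace S" and x: "x \<in> S"
  shows "\<bar>f x\<bar> \<le> sdual_norm S f * norm x"
proof (cases "x = 0")
  case True then show ?thesis using sdual_0[OF f] by simp
next
  case False
  define y where "y = (1 / norm x) *\<^sub>R x"
  have y: "y \<in> {x\<in>S. norm x \<le> 1}" using False x S by (simp add: y_def subspace_scale)
  have "\<bar>f y\<bar> \<le> sdual_norm S f"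
    unfolding sdual_norm_def by (rule cSUP_upper[OF y sdual_norm_bdd[OF f]])
  moreover have "\<bar>f y\<bar> = \<bar>f x\<bar> / norm x"
    using sdualD(2)[OF f x, of "1 / norm x"] by (simp add: y_def abs_mult)
  ultimately show ?thesis using False by (simp add: field_simps)
qed

lemma sdual_norm_nonneg:
  assumes f: "f \<in> sdual S" and S: "subspace S"
  shows "0 \<le> sdual_norm S f"
proof -
  have "\<bar>f 0\<bar> \<le> sdual_norm S f"
    unfolding sdual_norm_def using subspace_0[OF S]
    by (intro cSUP_upper[OF _ sdual_norm_bdd[OF f]]) simp
  then show ?thesis by simp
qed

definition restr :: "'a set \<Rightarrow> ('a \<Rightarrow> real) \<Rightarrow> 'a \<Rightarrow> real" where
  "restr M f = (\<lambda>x. if x \<in> M then f x else 0)"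

lemma restr_sdual:
  assumes "f \<in> sdual (UNIV::'a::real_normed_vector set)" "subspace M"
  shows "restr M f \<in> sdual M"
proof -
  obtain K where K: "K \<ge> 0" "\<forall>x. \<bar>f x\<bar> \<le> K * norm x" using sdualD(3)[OF assms(1)] by blast
  show ?thesis unfolding sdual_def restr_def
    using sdualD(1,2)[OF assms(1)] K assms(2)
    by (auto simp: subspace_add subspace_scale)
qed

lemma restr_norm:
  assumes "f \<in> sdual (UNIV::'a::real_normed_vector set)" "subspace M"
  shows "sdual_norm M (restr M f) \<le> sdual_norm UNIV f"
  unfolding sdual_norm_def
proof (rule cSUP_subset_mono)
  show "{x \<in> M. norm x \<le> 1} \<noteq> {}" using subspace_0[OF assms(2)] by auto
  show "bdd_above ((\<lambda>x. \<bar>f x\<bar>) ` {x \<in> UNIV. norm x \<le> 1})" by (rule sdual_norm_bdd[OF assms(1)])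
qed (auto simp: restr_def)

lemma restr_sbidual:
  assumes "\<Phi> \<in> sbidual M" "subspace M"
  shows "(\<lambda>f. \<Phi> (restr M f)) \<in> sbidual (UNIV::'a::real_normed_vector set)"
proof -
  have add: "\<forall>f\<in>sdual M. \<forall>g\<in>sdual M. \<Phi> (\<lambda>x. f x + g x) = \<Phi> f + \<Phi> g"
    and hom: "\<forall>c. \<forall>f\<in>sdual M. \<Phi> (\<lambda>x. c * f x) = c * \<Phi> f"
    using assms(1) unfolding sbidual_def by blast+
  obtain K where K: "\<forall>f\<in>sdual M. \<bar>\<Phi> f\<bar> \<le> K * sdual_norm M f" using assms(1) unfolding sbidual_def by blast
  have r1: "restr M (\<lambda>x. f x + g x) = (\<lambda>x. restr M f x + restr M g x)" for f g
    by (auto simp: restr_def)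
  have r2: "restr M (\<lambda>x. c * f x) = (\<lambda>x. c * restr M f x)" for c f
    by (auto simp: restr_def)
  have bd: "\<bar>\<Phi> (restr M f)\<bar> \<le> max K 0 * sdual_norm UNIV f" if f: "f \<in> sdual UNIV" for f
  proof -
    have rf: "restr M f \<in> sdual M" by (rule restr_sdual[OF f assms(2)])
    have "\<bar>\<Phi> (restr M f)\<bar> \<le> K * sdual_norm M (restr M f)" using K rf by blast
    also have "\<dots> \<le> max K 0 * sdual_norm M (restr M f)"
      using sdual_norm_nonneg[OF rf assms(2)] by (simp add: mult_right_mono)
    also have "\<dots> \<le> max K 0 * sdual_norm UNIV f"
      using restr_norm[OF f assms(2)] by (simp add: mult_left_mono)
    finally show ?thesis .
  qed
  have bd': "\<exists>K. \<forall>f\<in>sdual UNIV. \<bar>\<Phi> (restr M f)\<bar> \<le> K * sdual_norm UNIV f"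
    using bd by blast
  show ?thesis unfolding sbidual_def
  proof (intro CollectI conjI)
    show "\<exists>K. \<forall>f\<in>sdual UNIV. \<bar>\<Phi> (restr M f)\<bar> \<le> K * sdual_norm UNIV f" by (rule bd')
  qed (use add hom restr_sdual[OF _ assms(2)] in \<open>auto simp: r1 r2\<close>)
qed

lemma eval_sbidual: "(\<lambda>f. f x) \<in> sbidual (UNIV::'a::real_normed_vector set)"
proof -
  have "\<forall>f\<in>sdual UNIV. \<bar>f x\<bar> \<le> norm x * sdual_norm UNIV f"
    using sdual_norm_bound[of _ UNIV x] by (simp add: mult.commute)
  then show ?thesis unfolding sbidual_def by auto
qed

lemma five_abs:
  fixes A b c p q e :: real
  shows "X = A + b - c + p - q \<Longrightarrow> \<bar>A\<bar> < e / 4 \<Longrightarrow> \<bar>b\<bar> < e / 4 \<Longrightarrow> \<bar>c\<bar> < e / 4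
    \<Longrightarrow> \<bar>p\<bar> \<le> e / 8 \<Longrightarrow> \<bar>q\<bar> \<le> e / 8 \<Longrightarrow> \<bar>X\<bar> < e"
  by arith

lemma main_subseq:
  fixes u :: "nat \<Rightarrow> 'a::banach \<Rightarrow> real"
  assumes G: "grothendieck_space (UNIV :: 'a set)"
    and M: "subspace M" "closed M" and QS: "quotient_separable M"
    and u: "\<And>n. u n \<in> sdual M" and ulim: "\<And>x. x \<in> M \<Longrightarrow> (\<lambda>n. u n x) \<longlonglongrightarrow> 0"
  shows "\<exists>s. strict_mono s \<and> (\<forall>\<Phi>\<in>sbidual M. (\<lambda>n. \<Phi> (u (s n))) \<longlonglongrightarrow> 0)"
proof -
  have uconv: "\<And>x. x \<in> M \<Longrightarrow> convergent (\<lambda>n. u n x)" using ulim by (rule convergentI)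
  obtain B where B: "B \<ge> 0" "\<And>n x. x \<in> M \<Longrightarrow> \<bar>u n x\<bar> \<le> B * norm x"
    using uniform_bound[OF M u uconv] by blast
  have "\<forall>n. \<exists>F. (\<forall>x y. F (x + y) = F x + F y) \<and> (\<forall>c x. F (c *\<^sub>R x) = c * F x)
           \<and> (\<forall>x. \<bar>F x\<bar> \<le> B * norm x) \<and> (\<forall>x\<in>M. F x = u n x)"
  proof
    fix n show "\<exists>F. (\<forall>x y. F (x + y) = F x + F y) \<and> (\<forall>c x. F (c *\<^sub>R x) = c * F x)
           \<and> (\<forall>x. \<bar>F x\<bar> \<le> B * norm x) \<and> (\<forall>x\<in>M. F x = u n x)"
    proof (rule hahn_banach_norm[OF M(1) B(1)])
      show "\<forall>x\<in>M. \<forall>y\<in>M. u n (x + y) = u n x + u n y" using sdualD(1)[OF u[of n]] by blast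
      show "\<forall>c. \<forall>x\<in>M. u n (c *\<^sub>R x) = c * u n x" using sdualD(2)[OF u[of n]] by blast
      show "\<forall>x\<in>M. \<bar>u n x\<bar> \<le> B * norm x" using B(2) by blast
    qed
  qed
  from choice[OF this] obtain F where F: "\<forall>n. (\<forall>x y. F n (x + y) = F n x + F n y) \<and> (\<forall>c x. F n (c *\<^sub>R x) = c * F n x)
           \<and> (\<forall>x. \<bar>F n x\<bar> \<le> B * norm x) \<and> (\<forall>x\<in>M. F n x = u n x)" by blast
  have Fadd: "\<And>n x y. F n (x + y) = F n x + F n y"
    and Fsc: "\<And>n c x. F n (c *\<^sub>R x) = c * F n x"
    and Fbd: "\<And>n x. \<bar>F n x\<bar> \<le> B * norm x"
    and FM: "\<And>n x. x \<in> M \<Longrightarrow> F n x = u n x"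
    using F by blast+
  obtain D where D: "countable D" "\<And>x e. e > 0 \<Longrightarrow> \<exists>d\<in>D. infdist (x - d) M < e"
    using QS unfolding quotient_separable_def by blast
  have Dne: "D \<noteq> {}" using D(2)[of 1 0] by auto
  define d where "d = from_nat_into D"
  have rd: "range d = D" using Dne D(1) by (simp add: d_def)
  interpret dg: subseqs "\<lambda>k s. convergent (\<lambda>n. F (s n) (d k))"
  proof
    fix k and s :: "nat \<Rightarrow> nat" assume "strict_mono s"
    obtain r where r: "strict_mono r" "monoseq (\<lambda>n. F (s (r n)) (d k))"
      using seq_monosub[of "\<lambda>n. F (s n) (d k)"] by blast
    have "Bseq (\<lambda>n. F (s (r n)) (d k))"
      using Fbd by (intro BseqI'[of _ "B * norm (d k)"]) simp
    then have "convergent (\<lambda>n. F (s (r n)) (d k))" using r(2) Bseq_monoseq_convergent by blast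
    then have "convergent (\<lambda>n. F ((s \<circ> r) n) (d k))" by (simp add: o_def)
    then show "\<exists>r'. strict_mono r' \<and> convergent (\<lambda>n. F ((s \<circ> r') n) (d k))" using r(1) by blast
  qed
  define s where "s = dg.diagseq"
  have smono: "strict_mono s" unfolding s_def by (rule dg.subseq_diagseq)
  have convd: "convergent (\<lambda>n. F (s n) (d k))" for k
  proof -
    have "convergent (\<lambda>n. F ((dg.diagseq \<circ> (+) (Suc k)) n) (d k))"
    proof (rule dg.diagseq_holds)
      fix r s' :: "nat \<Rightarrow> nat" and n :: nat assume "strict_mono r" "convergent (\<lambda>m. F (s' m) (d n))"
      then show "convergent (\<lambda>m. F ((s' \<circ> r) m) (d n))"
        using convergent_subseq_convergent[of "\<lambda>m. F (s' m) (d n)" r] by (simp add: o_def)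
    qed
    then obtain l where "(\<lambda>n. F (s (n + Suc k)) (d k)) \<longlonglongrightarrow> l"
      by (auto simp: convergent_def s_def o_def add.commute)
    then have "(\<lambda>n. F (s n) (d k)) \<longlonglongrightarrow> l" by (rule LIMSEQ_offset)
    then show ?thesis by (auto simp: convergent_def)
  qed
  have convx: "convergent (\<lambda>n. F (s n) x)" for x
  proof -
    have "Cauchy (\<lambda>n. F (s n) x)"
    proof (rule CauchyI)
      fix e :: real assume e: "e > 0"
      define \<delta> where "\<delta> = e / (8 * (B + 1))"
      have \<delta>: "\<delta> > 0" using e B by (simp add: \<delta>_def)
      obtain d' where d': "d' \<in> D" "infdist (x - d') M < \<delta>" using D(2)[OF \<delta>] by blast
      have "M \<noteq> {}" using subspace_0[OF M(1)] by auto
      then have "(INF a\<in>M. dist (x - d') a) < \<delta>" using d'(2) by (simp add: infdist_notempty)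
      then obtain m where m: "m \<in> M" "dist (x - d') m < \<delta>"
        using \<open>M \<noteq> {}\<close> by (auto simp: cINF_less_iff)
      obtain k where k: "d' = d k" using d'(1) rd by blast
      define w where "w = x - d' - m"
      have xs: "x = d' + m + w" by (simp add: w_def)
      have wn: "norm w < \<delta>" using m(2) by (simp add: w_def dist_norm)
      have Fw: "\<bar>F j w\<bar> \<le> e / 8" for j
      proof -
        have "\<bar>F j w\<bar> \<le> B * norm w" by (rule Fbd)
        also have "\<dots> \<le> (B + 1) * \<delta>" using wn B by (intro mult_mono) auto
        also have "\<dots> = e / 8"
        proof -
          have "B + 1 \<noteq> 0" using B(1) by linarith
          then show ?thesis by (simp add: \<delta>_def field_simps)
        qed
        finally show ?thesis .
      qed
      have "Cauchy (\<lambda>n. F (s n) d')" using convd[of k] k by (simp add: convergent_Cauchy)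
      then obtain N1 where N1: "\<And>i j. i \<ge> N1 \<Longrightarrow> j \<ge> N1 \<Longrightarrow> \<bar>F (s i) d' - F (s j) d'\<bar> < e / 4"
        using CauchyD[of _ "e/4"] e by fastforce
      have "(\<lambda>n. u (s n) m) \<longlonglongrightarrow> 0"
        using LIMSEQ_subseq_LIMSEQ[OF ulim[OF m(1)] smono] by (simp add: o_def)
      then obtain N2 where N2: "\<And>i. i \<ge> N2 \<Longrightarrow> \<bar>u (s i) m\<bar> < e / 4"
      proof -
        have "e / 4 > 0" using e by simp
        from LIMSEQ_D[OF \<open>(\<lambda>n. u (s n) m) \<longlonglongrightarrow> 0\<close> this] obtain N2 where "\<forall>i\<ge>N2. norm (u (s i) m - 0) < e / 4" by blast
        then show ?thesis using that by auto
      qed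
      show "\<exists>N. \<forall>i\<ge>N. \<forall>j\<ge>N. norm (F (s i) x - F (s j) x) < e"
      proof (intro exI[of _ "max N1 N2"] allI impI)
        fix i j assume i: "i \<ge> max N1 N2" and j: "j \<ge> max N1 N2"
        have "F (s i) x - F (s j) x = (F (s i) d' - F (s j) d') + u (s i) m - u (s j) m + F (s i) w - F (s j) w"
          unfolding xs Fadd FM[OF m(1)] by simp
        moreover have "\<bar>F (s i) d' - F (s j) d'\<bar> < e / 4" using N1 i j by simp
        moreover have "\<bar>u (s i) m\<bar> < e / 4" "\<bar>u (s j) m\<bar> < e / 4" using N2 i j by simp_all
        moreover have "\<bar>F (s i) w\<bar> \<le> e / 8" "\<bar>F (s j) w\<bar> \<le> e / 8" using Fw by simp_all
        ultimately show "norm (F (s i) x - F (s j) x) < e" unfolding real_norm_def by (rule five_abs)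
      qed
    qed
    then show ?thesis by (simp add: Cauchy_convergent_iff)
  qed
  define L where "L x = lim (\<lambda>n. F (s n) x)" for x
  have FL: "(\<lambda>n. F (s n) x) \<longlonglongrightarrow> L x" for x
    using convx[of x] by (simp add: L_def convergent_LIMSEQ_iff)
  have Ladd: "L (x + y) = L x + L y" for x y
  proof -
    have "(\<lambda>n. F (s n) (x + y)) \<longlonglongrightarrow> L x + L y" unfolding Fadd by (intro tendsto_add FL)
    then show ?thesis using FL LIMSEQ_unique by blast
  qed
  have Lsc: "L (c *\<^sub>R x) = c * L x" for c x
  proof -
    have "(\<lambda>n. F (s n) (c *\<^sub>R x)) \<longlonglongrightarrow> c * L x" unfolding Fsc by (intro tendsto_mult_left FL)
    then show ?thesis using FL LIMSEQ_unique by blast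
  qed
  have Lbd: "\<bar>L x\<bar> \<le> B * norm x" for x
    by (rule LIMSEQ_le_const2[OF tendsto_rabs[OF FL]]) (use Fbd in auto)
  have LM: "L x = 0" if "x \<in> M" for x
  proof -
    have "(\<lambda>n. F (s n) x) \<longlonglongrightarrow> 0"
      using LIMSEQ_subseq_LIMSEQ[OF ulim[OF that] smono] FM[OF that] by (simp add: o_def)
    then show ?thesis using FL LIMSEQ_unique by blast
  qed
  define v where "v n = (\<lambda>x. F (s n) x + (-1) * L x)" for n
  have Fsd: "F n \<in> sdual UNIV" for n
    unfolding sdual_def using Fadd Fsc Fbd by blast
  have Lsd: "L \<in> sdual UNIV"
    unfolding sdual_def using Ladd Lsc Lbd by blast
  have vsd: "v n \<in> sdual UNIV" for n
    unfolding v_def by (intro sdual_add sdual_scale Fsd Lsd)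
  have vlim: "(\<lambda>n. v n x) \<longlonglongrightarrow> 0" for x
  proof -
    have "(\<lambda>n. v n x) \<longlonglongrightarrow> L x + (-1) * L x" unfolding v_def by (intro tendsto_intros FL)
    then show ?thesis by simp
  qed
  obtain h where h: "h \<in> sdual UNIV" "\<And>\<Psi>. \<Psi> \<in> sbidual UNIV \<Longrightarrow> (\<lambda>n. \<Psi> (v n)) \<longlonglongrightarrow> \<Psi> h"
  proof -
    have "(\<forall>n. v n \<in> sdual UNIV) \<longrightarrow> (\<exists>g0\<in>sdual UNIV. \<forall>x\<in>UNIV. (\<lambda>n. v n x) \<longlonglongrightarrow> g0 x) \<longrightarrow>
        (\<exists>h\<in>sdual UNIV. \<forall>\<Psi>\<in>sbidual UNIV. (\<lambda>n. \<Psi> (v n)) \<longlonglongrightarrow> \<Psi> h)"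
      using G unfolding grothendieck_space_def by (rule spec)
    moreover have "\<exists>g0\<in>sdual UNIV. \<forall>x\<in>UNIV. (\<lambda>n. v n x) \<longlonglongrightarrow> g0 x"
    proof (rule bexI[of _ "\<lambda>x. 0"])
      show "(\<lambda>x. 0) \<in> sdual UNIV" by (rule sdual_zero_fun)
      show "\<forall>x\<in>UNIV. (\<lambda>n. v n x) \<longlonglongrightarrow> 0" using vlim by blast
    qed
    ultimately have "\<exists>h\<in>sdual UNIV. \<forall>\<Psi>\<in>sbidual UNIV. (\<lambda>n. \<Psi> (v n)) \<longlonglongrightarrow> \<Psi> h"
      using vsd by blast
    then show ?thesis using that by blast
  qed
  have h0: "h x = 0" for x
    using h(2)[OF eval_sbidual[of x]] vlim[of x] LIMSEQ_unique by blast
  have rv: "restr M (v n) = u (s n)" for n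
  proof
    fix x show "restr M (v n) x = u (s n) x"
      by (cases "x \<in> M") (auto simp: restr_def v_def FM LM sdualD(4)[OF u])
  qed
  have rh: "restr M h = (\<lambda>x. 0)" by (auto simp: restr_def h0)
  have "(\<lambda>n. \<Phi> (u (s n))) \<longlonglongrightarrow> 0" if \<Phi>: "\<Phi> \<in> sbidual M" for \<Phi>
  proof -
    have "(\<lambda>n. \<Phi> (restr M (v n))) \<longlonglongrightarrow> \<Phi> (restr M h)"
      using h(2)[OF restr_sbidual[OF \<Phi> M(1)]] .
    moreover have "\<Phi> (\<lambda>x. 0) = 0"
    proof -
      have hom: "\<forall>c. \<forall>f\<in>sdual M. \<Phi> (\<lambda>x. c * f x) = c * \<Phi> f"
        using \<Phi> unfolding sbidual_def by blast
      show ?thesis using hom[rule_format, OF sdual_zero_fun[of M], of 0] by simp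
    qed
    ultimately show ?thesis by (simp add: rv rh)
  qed
  then show ?thesis using smono by blast
qed

theorem proposition3p1:
  fixes M :: "'a::banach set"
  assumes "grothendieck_space (UNIV :: 'a set)"
    and "subspace M" and "closed M"
    and "quotient_separable M"
  shows "grothendieck_space M"
  unfolding grothendieck_space_def
proof (intro allI impI)
  fix g :: "nat \<Rightarrow> 'a \<Rightarrow> real"
  assume g: "\<forall>n. g n \<in> sdual M" and "\<exists>g0\<in>sdual M. \<forall>x\<in>M. (\<lambda>n. g n x) \<longlonglongrightarrow> g0 x"
  then obtain g0 where g0: "g0 \<in> sdual M" "\<And>x. x \<in> M \<Longrightarrow> (\<lambda>n. g n x) \<longlonglongrightarrow> g0 x" by blast
  define u where "u n = (\<lambda>x. g n x + (-1) * g0 x)" for n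
  have usd: "u n \<in> sdual M" for n
    unfolding u_def using g g0(1) by (intro sdual_add sdual_scale) auto
  have ulim: "(\<lambda>n. u n x) \<longlonglongrightarrow> 0" if "x \<in> M" for x
  proof -
    have "(\<lambda>n. u n x) \<longlonglongrightarrow> g0 x + (-1) * g0 x" unfolding u_def by (intro tendsto_intros g0(2) that)
    then show ?thesis by simp
  qed
  have "(\<lambda>n. \<Phi> (g n)) \<longlonglongrightarrow> \<Phi> g0" if \<Phi>: "\<Phi> \<in> sbidual M" for \<Phi>
  proof -
    have add: "\<forall>f\<in>sdual M. \<forall>h\<in>sdual M. \<Phi> (\<lambda>x. f x + h x) = \<Phi> f + \<Phi> h"
      and hom: "\<forall>c. \<forall>f\<in>sdual M. \<Phi> (\<lambda>x. c * f x) = c * \<Phi> f"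
      using \<Phi> unfolding sbidual_def by blast+
    have Pu: "\<Phi> (u n) = \<Phi> (g n) - \<Phi> g0" for n
    proof -
      have "\<Phi> (u n) = \<Phi> (g n) + \<Phi> (\<lambda>x. (-1) * g0 x)"
        unfolding u_def by (rule add[rule_format, OF g[rule_format, of n] sdual_scale[OF g0(1), of "-1"]])
      also have "\<Phi> (\<lambda>x. (-1) * g0 x) = - \<Phi> g0" using hom[rule_format, OF g0(1), of "-1"] by simp
      finally show ?thesis by simp
    qed
    have "(\<lambda>n. \<Phi> (u n)) \<longlonglongrightarrow> 0"
    proof (rule ccontr)
      assume nc: "\<not> (\<lambda>n. \<Phi> (u n)) \<longlonglongrightarrow> 0"
      then obtain r where r: "r > 0" "\<forall>no. \<exists>n\<ge>no. \<not> norm (\<Phi> (u n) - 0) < r"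
        unfolding LIMSEQ_iff by blast
      then have "infinite {n. r \<le> \<bar>\<Phi> (u n)\<bar>}"
        unfolding infinite_nat_iff_unbounded_le by (auto simp: not_less)
      then obtain q :: "nat \<Rightarrow> nat" where q: "strict_mono q" "\<And>n. r \<le> \<bar>\<Phi> (u (q n))\<bar>"
        using infinite_enumerate by blast
      obtain s where s: "strict_mono s" "\<forall>\<Psi>\<in>sbidual M. (\<lambda>n. \<Psi> (u (q (s n)))) \<longlonglongrightarrow> 0"
      proof -
        have uq: "(\<lambda>n. u (q n) x) \<longlonglongrightarrow> 0" if "x \<in> M" for x
          using LIMSEQ_subseq_LIMSEQ[OF ulim[OF that] q(1)] by (simp add: o_def)
        show ?thesis using main_subseq[OF assms(1,2,3,4), of "\<lambda>n. u (q n)", OF usd uq] that by blast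
      qed
      have "(\<lambda>n. \<Phi> (u (q (s n)))) \<longlonglongrightarrow> 0" using s(2) \<Phi> by blast
      from LIMSEQ_D[OF this r(1)] obtain N where "\<forall>n\<ge>N. norm (\<Phi> (u (q (s n))) - 0) < r" by blast
      then have "\<bar>\<Phi> (u (q (s N)))\<bar> < r" by auto
      with q(2)[of "s N"] show False by simp
    qed
    then have "(\<lambda>n. \<Phi> (u n) + \<Phi> g0) \<longlonglongrightarrow> 0 + \<Phi> g0" by (intro tendsto_intros)
    then show ?thesis by (simp add: Pu)
  qed
  then show "\<exists>h\<in>sdual M. \<forall>\<Phi>\<in>sbidual M. (\<lambda>n. \<Phi> (g n)) \<longlonglongrightarrow> \<Phi> h" using g0(1) by blast
qed

end
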